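(* If $(A_n)_{n=0}^\infty$ is an Appell sequence, then $A_n^{**}=A_n$ for all $n\geq0$.
   Context: An Appell sequence is a sequence of polynomials $(A_n)_{n\ge0}$ with $A_0=1$ and $A_n'=nA_{n-1}$ for $n\ge1$. For a partition $\lambda$ of length $r$, let $(n_1,\dots,n_r)=(\lambda_r,\lambda_{r-1}+1,\dots,\lambda_1+r-1)$ and $A_\lambda=\operatorname{Wr}[A_{n_1},\dots,A_{n_r}]/\Delta(n_1,\dots,n_r)$, where $\operatorname{Wr}$ is the Wronskian and $\Delta$ the Vandermonde determinant $\prod_{i<j}(x_j-x_i)$. The dual sequence $A^*$ is defined by $A^*_n=A_{(1^n)}$, with $(1^n)=(1,\dots,1)$ ($n$ ones); it is again an Appell sequence, and $A^{**}=(A^* )^*$. *)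

theory Defs
  imports "HOL-Computational_Algebra.Polynomial" "Jordan_Normal_Form.Determinant"
begin

definition appell :: "(nat \<Rightarrow> complex poly) \<Rightarrow> bool" where
  "appell A \<longleftrightarrow> A 0 = 1 \<and> (\<forall>n\<ge>1. pderiv (A n) = smult (of_nat n) (A (n - 1)))"

definition wronskian :: "complex poly list \<Rightarrow> complex poly" where
  "wronskian fs = det (mat (length fs) (length fs) (\<lambda>(i, j). (pderiv ^^ i) (fs ! j)))"

definition vandermonde :: "int list \<Rightarrow> int" where
  "vandermonde xs = (\<Prod>(i, j) \<in> {(i, j). i < j \<and> j < length xs}. xs ! j - xs ! i)"

definition is_partition :: "nat list \<Rightarrow> bool" where
  "is_partition lam \<longleftrightarrow> sorted_wrt (\<ge>) lam \<and> (\<forall>x\<in>set lam. x > 0)"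

text \<open>(n_1,...,n_r) = (lambda_r, lambda_{r-1}+1, ..., lambda_1+r-1), 0-indexed.\<close>
definition part_degrees :: "nat list \<Rightarrow> nat list" where
  "part_degrees lam = map (\<lambda>i. lam ! (length lam - 1 - i) + i) [0..<length lam]"

definition appell_part :: "(nat \<Rightarrow> complex poly) \<Rightarrow> nat list \<Rightarrow> complex poly" where
  "appell_part A lam =
     smult (inverse (of_int (vandermonde (map int (part_degrees lam)))))
           (wronskian (map A (part_degrees lam)))"

definition appell_dual :: "(nat \<Rightarrow> complex poly) \<Rightarrow> nat \<Rightarrow> complex poly" where
  "appell_dual A n = appell_part A (replicate n 1)"

end

theory Submission
  imports Defs
begin

definition Tm :: "(nat \<Rightarrow> 'a::comm_ring_1) \<Rightarrow> nat \<Rightarrow> nat \<Rightarrow> 'a" where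
  "Tm B i j = (if i \<le> Suc j then B (Suc j - i) else 0)"
definition Hm :: "(nat \<Rightarrow> 'a::comm_ring_1) \<Rightarrow> nat \<Rightarrow> 'a mat" where
  "Hm B n = mat n n (\<lambda>(i,j). Tm B i j)"
definition Hd :: "(nat \<Rightarrow> 'a::comm_ring_1) \<Rightarrow> nat \<Rightarrow> 'a" where
  "Hd B n = det (Hm B n)"
definition Gm :: "(nat \<Rightarrow> 'a::comm_ring_1) \<Rightarrow> (nat \<Rightarrow> 'a) \<Rightarrow> nat \<Rightarrow> 'a mat" where
  "Gm B v n = mat n n (\<lambda>(i,j). if i = 0 then v j else Tm B i j)"

lemma Gm_B: "Gm B (\<lambda>j. B (Suc j)) n = Hm B n"
  unfolding Gm_def Hm_def by (rule cong_mat) (auto simp: Tm_def)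

lemma Hd_0[simp]: "Hd B 0 = 1"
  unfolding Hd_def Hm_def by (rule det_dim_zero) auto

lemma Gm_step:
  assumes B0: "B 0 = 1"
  shows "det (Gm B v (Suc n)) = v 0 * Hd B n - (if n = 0 then 0 else det (Gm B (\<lambda>j. v (Suc j)) n))"
proof -
  let ?G = "Gm B v (Suc n)"
  have car: "?G \<in> carrier_mat (Suc n) (Suc n)" unfolding Gm_def by auto
  have d0: "mat_delete ?G 0 0 = Hm B n"
    unfolding Gm_def Hm_def mat_delete_def by (rule eq_matI) (auto simp: Tm_def)
  have "det ?G = (\<Sum>i<Suc n. ?G $$ (i,0) * cofactor ?G i 0)"
    by (rule laplace_expansion_column[OF car]) auto
  also have "\<dots> = ?G $$ (0,0) * cofactor ?G 0 0 + (\<Sum>i<n. ?G $$ (Suc i,0) * cofactor ?G (Suc i) 0)"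
    by (rule sum.lessThan_Suc_shift)
  finally have e: "det ?G = v 0 * Hd B n + (\<Sum>i<n. ?G $$ (Suc i,0) * cofactor ?G (Suc i) 0)"
    using d0 by (simp add: cofactor_def Gm_def Hd_def)
  show ?thesis
  proof (cases n)
    case 0
    then show ?thesis using e by simp
  next
    case (Suc m)
    have d1: "mat_delete ?G 1 0 = Gm B (\<lambda>j. v (Suc j)) n"
      unfolding Gm_def Hm_def mat_delete_def by (rule eq_matI) (auto simp: Tm_def)
    have "(\<Sum>i<n. ?G $$ (Suc i,0) * cofactor ?G (Suc i) 0)
       = ?G $$ (1,0) * cofactor ?G 1 0 + (\<Sum>i<m. ?G $$ (Suc (Suc i),0) * cofactor ?G (Suc (Suc i)) 0)"
      unfolding Suc by (subst sum.lessThan_Suc_shift) simp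
    also have "(\<Sum>i<m. ?G $$ (Suc (Suc i),0) * cofactor ?G (Suc (Suc i)) 0) = 0"
      by (rule sum.neutral) (auto simp: Gm_def Tm_def Suc)
    also have "?G $$ (1,0) * cofactor ?G 1 0 = - det (Gm B (\<lambda>j. v (Suc j)) n)"
      using d1 by (simp add: cofactor_def Gm_def Tm_def B0 Suc)
    finally show ?thesis using e Suc by simp
  qed
qed

lemma Gm_sum:
  assumes B0: "B 0 = 1" and "n \<ge> 1"
  shows "det (Gm B v n) = (\<Sum>j<n. (-1)^j * v j * Hd B (n - 1 - j))"
  using assms(2)
proof (induction n arbitrary: v)
  case 0 then show ?case by simp
next
  case (Suc n)
  show ?case
  proof (cases n)
    case 0 then show ?thesis using Gm_step[where B=B and v=v and n=0, OF B0] by simp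
  next
    case (Suc m)
    have "det (Gm B v (Suc n)) = v 0 * Hd B n - (\<Sum>j<n. (-1)^j * v (Suc j) * Hd B (n - 1 - j))"
      using Gm_step[where B=B and v=v and n=n, OF B0] Suc.IH[of "\<lambda>j. v (Suc j)"] Suc by simp
    also have "\<dots> = (\<Sum>j<Suc n. (-1)^j * v j * Hd B (Suc n - 1 - j))"
      by (subst sum.lessThan_Suc_shift) (simp add: sum_negf[symmetric])
    finally show ?thesis .
  qed
qed

lemma Hd_rec:
  assumes B0: "B 0 = 1" and "n \<ge> 1"
  shows "Hd B n = (\<Sum>j<n. (-1)^j * B (Suc j) * Hd B (n - 1 - j))"
  using Gm_sum[where B=B and v="\<lambda>j. B (Suc j)", OF assms] unfolding Gm_B Hd_def[symmetric] .

definition conv :: "(nat \<Rightarrow> 'a::comm_ring_1) \<Rightarrow> (nat \<Rightarrow> 'a) \<Rightarrow> nat \<Rightarrow> 'a" where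
  "conv B X n = (\<Sum>k\<le>n. (-1)^k * B k * X (n - k))"

lemma conv_Hd:
  assumes B0: "B 0 = 1"
  shows "conv B (Hd B) n = (if n = 0 then 1 else 0)"
proof (cases n)
  case 0 then show ?thesis by (simp add: conv_def B0)
next
  case (Suc m)
  have "conv B (Hd B) n = Hd B (Suc m) + (\<Sum>k\<le>m. (-1)^(Suc k) * B (Suc k) * Hd B (Suc m - Suc k))"
    unfolding conv_def Suc by (subst sum.atMost_Suc_shift) (simp add: B0)
  also have "(\<Sum>k\<le>m. (-1)^(Suc k) * B (Suc k) * Hd B (Suc m - Suc k)) = - Hd B (Suc m)"
    by (subst Hd_rec[where B=B and n="Suc m", OF B0]) (simp_all add: lessThan_Suc_atMost sum_negf[symmetric])
  finally show ?thesis using Suc by simp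
qed

lemma conv_sym:
  fixes B :: "nat \<Rightarrow> 'a::comm_ring_1"
  shows "conv C B n = (-1)^n * conv B C n"
proof -
  have "conv B C n = (\<Sum>k<Suc n. (-1)^k * B k * C (n - k))"
    unfolding conv_def lessThan_Suc_atMost ..
  also have "\<dots> = (\<Sum>k<Suc n. (-1)^(n - k) * B (n - k) * C k)"
    by (subst sum.nat_diff_reindex[symmetric]) (rule sum.cong, auto simp: Suc_diff_le)
  finally have e: "conv B C n = (\<Sum>k<Suc n. (-1)^(n - k) * B (n - k) * C k)" .
  have "(-1)^n * conv B C n = (\<Sum>k<Suc n. (-1)^k * C k * B (n - k))"
    unfolding e sum_distrib_left
  proof (rule sum.cong)
    fix k assume "k \<in> {..<Suc n}"
    then have nk: "n + (n - k) = k + 2 * (n - k)" by auto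
    have "(-1::'a)^n * (-1)^(n-k) = (-1)^(n + (n - k))" by (simp add: power_add)
    also have "\<dots> = (-1)^k" unfolding nk by (simp add: power_add power_mult)
    finally have "(-1::'a)^n * (-1)^(n-k) = (-1)^k" .
    then show "(-1)^n * ((-1)^(n - k) * B (n - k) * C k) = (-1)^k * C k * B (n - k)"
      by (metis (no_types, lifting) mult.assoc mult.commute)
  qed simp
  then show ?thesis unfolding conv_def lessThan_Suc_atMost by simp
qed

lemma conv_unique:
  assumes B0: "B 0 = 1" and eq: "\<And>n. conv B X n = conv B Y n"
  shows "X n = Y n"
proof (induction n rule: less_induct)
  case (less n)
  have s: "conv B Z n = Z n + (\<Sum>k<n. (-1)^(Suc k) * B (Suc k) * Z (n - Suc k))" for Z :: "nat \<Rightarrow> 'a"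
  proof -
    have "conv B Z n = (\<Sum>k<Suc n. (-1)^k * B k * Z (n - k))"
      unfolding conv_def lessThan_Suc_atMost ..
    also have "\<dots> = Z n + (\<Sum>k<n. (-1)^(Suc k) * B (Suc k) * Z (n - Suc k))"
      by (subst sum.lessThan_Suc_shift) (simp add: B0)
    finally show ?thesis .
  qed
  have "(\<Sum>k<n. (-1)^(Suc k) * B (Suc k) * X (n - Suc k)) = (\<Sum>k<n. (-1)^(Suc k) * B (Suc k) * Y (n - Suc k))"
    by (rule sum.cong) (auto simp: less.IH)
  then show ?case using s[of X] s[of Y] eq[of n] by simp
qed


lemma pderiv_m1pow[simp]: "pderiv ((-1::complex poly)^k) = 0"
  by (induction k) (simp_all add: pderiv_mult pderiv_minus)

lemma pderiv_sum: "pderiv (sum f S) = (\<Sum>x\<in>S. pderiv (f x))"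
  by (induction S rule: infinite_finite_induct) (simp_all add: pderiv_add)

lemma vander_aux: "(\<Prod>(i,j)\<in>{(i,j). i<j \<and> j<(n::nat)}. (int j - int i)) = (\<Prod>j<n. fact j)"
proof (induction n)
  case 0 then show ?case by simp
next
  case (Suc n)
  have S: "{(i,j). i<j \<and> j<Suc n} = {(i,j). i<j \<and> j<n} \<union> (\<lambda>i. (i,n)) ` {..<n}" by auto
  have fin: "finite {(i,j). i<j \<and> j<(n::nat)}"
    by (rule finite_subset[of _ "{..<n} \<times> {..<n}"]) auto
  have "(\<Prod>(i,j)\<in>(\<lambda>i. (i,n)) ` {..<n}. (int j - int i)) = (\<Prod>i<n. (int n - int i))"
    by (subst prod.reindex) (auto simp: inj_on_def)
  also have "\<dots> = (\<Prod>i<n. int (Suc (n - Suc i)))"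
    by (rule prod.cong) auto
  also have "\<dots> = (\<Prod>i<n. int (Suc i))"
    by (rule prod.nat_diff_reindex)
  also have "\<dots> = fact n"
    by (simp add: fact_prod_Suc atLeast0LessThan)
  finally have e: "(\<Prod>(i,j)\<in>(\<lambda>i. (i,n)) ` {..<n}. (int j - int i)) = fact n" .
  have "(\<Prod>(i,j)\<in>{(i,j). i<j \<and> j<Suc n}. (int j - int i))
      = (\<Prod>(i,j)\<in>{(i,j). i<j \<and> j<n}. (int j - int i)) * (\<Prod>(i,j)\<in>(\<lambda>i. (i,n)) ` {..<n}. (int j - int i))"
    unfolding S by (rule prod.union_disjoint) (use fin in auto)
  then show ?case using Suc e by simp
qed

lemma vander_Suc: "vandermonde (map int (map Suc [0..<n])) = (\<Prod>j<n. fact j)"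
proof -
  have "vandermonde (map int (map Suc [0..<n])) = (\<Prod>(i,j)\<in>{(i,j). i<j \<and> j<n}. (int j - int i))"
    unfolding vandermonde_def by (rule prod.cong) auto
  then show ?thesis using vander_aux by simp
qed

lemma part_degrees_ones: "part_degrees (replicate n 1) = map Suc [0..<n]"
  unfolding part_degrees_def by (rule nth_equalityI) auto

lemma det_col_scale:
  fixes f :: "nat \<Rightarrow> nat \<Rightarrow> 'a::comm_ring_1"
  shows "det (mat n n (\<lambda>(i,j). f i j * d j)) = (\<Prod>j<n. d j) * det (mat n n (\<lambda>(i,j). f i j))"
proof -
  have "det (mat n n (\<lambda>(i,j). f i j * d j)) =
     (\<Sum>p\<in>{p. p permutes {0..<n}}. signof p * (\<Prod>i=0..<n. f i (p i) * d (p i)))"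
    by (subst det_def'[of _ n]) auto
  also have "\<dots> = (\<Sum>p\<in>{p. p permutes {0..<n}}. (\<Prod>j<n. d j) * (signof p * (\<Prod>i=0..<n. f i (p i))))"
  proof (rule sum.cong)
    fix p assume "p \<in> {p. p permutes {0..<n}}"
    then have pp: "p permutes {0..<n}" by simp
    have "(\<Prod>i=0..<n. d (p i)) = (\<Prod>i=0..<n. d i)"
      using prod.permute[OF pp, of d] by (simp add: comp_def)
    then show "signof p * (\<Prod>i=0..<n. f i (p i) * d (p i)) = (\<Prod>j<n. d j) * (signof p * (\<Prod>i=0..<n. f i (p i)))"
      by (simp add: prod.distrib atLeast0LessThan mult_ac)
  qed simp
  also have "\<dots> = (\<Prod>j<n. d j) * det (mat n n (\<lambda>(i,j). f i j))"
    by (subst det_def'[of _ n]) (auto simp: sum_distrib_left)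
  finally show ?thesis .
qed

lemma funpow_pderiv_smult: "(pderiv ^^ i) (smult c p) = smult c ((pderiv ^^ i) p)"
  by (induction i) (simp_all add: pderiv_smult)

lemma funpow_pderiv_B:
  fixes B :: "nat \<Rightarrow> complex poly"
  assumes B0: "B 0 = 1" and dB: "\<And>k. k \<ge> 1 \<Longrightarrow> pderiv (B k) = B (k - 1)"
  shows "(pderiv ^^ i) (B m) = (if i \<le> m then B (m - i) else 0)"
proof (induction i)
  case 0 then show ?case by simp
next
  case (Suc i)
  show ?case
  proof (cases "Suc i \<le> m")
    case True
    then show ?thesis using Suc dB[of "m - i"] by (simp add: Suc_diff_Suc)
  next
    case False
    then show ?thesis using Suc B0 by (auto simp: pderiv_pCons)
  qed
qed

lemma deriv_Hd:
  fixes B :: "nat \<Rightarrow> complex poly"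
  assumes B0: "B 0 = 1" and dB: "\<And>k. k \<ge> 1 \<Longrightarrow> pderiv (B k) = B (k - 1)"
  shows "pderiv (Hd B (Suc n)) = Hd B n"
proof -
  let ?C = "Hd B" and ?X = "\<lambda>n. pderiv (Hd B (Suc n))"
  have "conv B ?X n = conv B ?C n" for n
  proof -
    have z: "pderiv (conv B ?C (Suc n)) = 0"
      using conv_Hd[where B=B and n="Suc n", OF B0] by simp
    have "pderiv (conv B ?C (Suc n)) =
       (\<Sum>k\<le>Suc n. (-1)^k * pderiv (B k) * ?C (Suc n - k)) + (\<Sum>k\<le>Suc n. (-1)^k * B k * pderiv (?C (Suc n - k)))"
      unfolding conv_def pderiv_sum sum.distrib[symmetric]
      by (rule sum.cong) (simp_all add: pderiv_mult algebra_simps)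
    also have "(\<Sum>k\<le>Suc n. (-1)^k * pderiv (B k) * ?C (Suc n - k)) = - conv B ?C n"
      unfolding conv_def
      by (subst sum.atMost_Suc_shift) (simp add: B0 dB sum_negf[symmetric])
    also have "(\<Sum>k\<le>Suc n. (-1)^k * B k * pderiv (?C (Suc n - k))) = conv B ?X n"
      unfolding conv_def
      by (subst sum.atMost_Suc) (auto intro!: sum.cong simp: Suc_diff_le)
    finally show ?thesis using z by simp
  qed
  then show ?thesis using conv_unique[where B=B and X="?X" and Y="?C", OF B0] by blast
qed


lemma prod_fact_Suc: "(\<Prod>j<n. fact (Suc j) :: complex) = fact n * (\<Prod>j<n. fact j)"
  by (induction n) (simp_all add: algebra_simps)

lemma prod_const_poly:
  fixes c :: "nat \<Rightarrow> complex" and n :: nat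
  shows "(\<Prod>j<n. [:c j:]) = [:\<Prod>j<n. c j:]"
  by (induct n) simp_all

lemma dual_eq:
  fixes A :: "nat \<Rightarrow> complex poly"
  assumes A0: "A 0 = 1" and dA: "\<And>n. n \<ge> 1 \<Longrightarrow> pderiv (A n) = smult (of_nat n) (A (n-1))"
  shows "appell_dual A n = smult (fact n) (Hd (\<lambda>k. smult (inverse (fact k)) (A k)) n)"
proof -
  define B where "B = (\<lambda>k. smult (inverse (fact k)) (A k))"
  have B0: "B 0 = 1" unfolding B_def using A0 by simp
  have dB: "pderiv (B k) = B (k - 1)" if k: "k \<ge> 1" for k
  proof -
    obtain m where m: "k = Suc m" using k by (cases k) auto
    have "pderiv (B k) = smult (inverse (fact k) * of_nat k) (A (k - 1))"
      unfolding B_def using dA[OF k] by (simp add: pderiv_smult)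
    also have "inverse (fact k) * of_nat k = (inverse (fact (k - 1)) :: complex)"
    proof -
      have nz: "(of_nat (Suc m) :: complex) \<noteq> 0" by (simp del: of_nat_Suc)
      show ?thesis unfolding m fact_Suc using nz by (simp del: of_nat_Suc add: field_simps)
    qed
    finally show ?thesis unfolding B_def .
  qed
  have AB: "A m = smult (fact m) (B m)" for m
    unfolding B_def by simp
  have ent: "(pderiv ^^ i) (A (Suc j)) = Tm B i j * [:fact (Suc j):]" for i j
    unfolding AB[of "Suc j"] funpow_pderiv_smult
    by (simp add: Tm_def funpow_pderiv_B[where B=B, OF B0 dB])
  have W: "wronskian (map A (map Suc [0..<n])) = det (mat n n (\<lambda>(i,j). Tm B i j * [:fact (Suc j):]))"
    unfolding wronskian_def by (rule arg_cong[where f=det], rule cong_mat) (auto simp: ent)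
  also have "\<dots> = [:\<Prod>j<n. fact (Suc j):] * Hd B n"
    unfolding det_col_scale[where f="Tm B"] Hd_def Hm_def prod_const_poly ..
  finally have W: "wronskian (map A (map Suc [0..<n])) = smult (\<Prod>j<n. fact (Suc j)) (Hd B n)" by simp
  have nz: "(\<Prod>j<n. fact j :: complex) \<noteq> 0" by simp
  have "appell_dual A n = smult (inverse (\<Prod>j<n. fact j) * (fact n * (\<Prod>j<n. fact j))) (Hd B n)"
    unfolding appell_dual_def appell_part_def part_degrees_ones vander_Suc W prod_fact_Suc
    by (simp add: of_int_prod)
  also have "inverse (\<Prod>j<n. fact j) * (fact n * (\<Prod>j<n. fact j)) = (fact n :: complex)"
    using nz by (simp add: field_simps)
  finally show ?thesis unfolding B_def .
qed

theorem corollary5p6: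
  fixes A :: "nat \<Rightarrow> complex poly"
  assumes "appell A"
  shows "\<forall>n. appell_dual (appell_dual A) n = A n"
proof
  fix n
  have A0: "A 0 = 1" and dA: "\<And>n. n \<ge> 1 \<Longrightarrow> pderiv (A n) = smult (of_nat n) (A (n-1))"
    using assms unfolding appell_def by auto
  define B where "B = (\<lambda>k. smult (inverse (fact k)) (A k))"
  have B0: "B 0 = 1" unfolding B_def using A0 by simp
  have dB: "pderiv (B k) = B (k - 1)" if k: "k \<ge> 1" for k
  proof -
    obtain m where m: "k = Suc m" using k by (cases k) auto
    have "pderiv (B k) = smult (inverse (fact k) * of_nat k) (A (k - 1))"
      unfolding B_def using dA[OF k] by (simp add: pderiv_smult)
    also have "inverse (fact k) * of_nat k = (inverse (fact (k - 1)) :: complex)"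
    proof -
      have nz: "(of_nat (Suc m) :: complex) \<noteq> 0" by (simp del: of_nat_Suc)
      show ?thesis unfolding m fact_Suc using nz by (simp del: of_nat_Suc add: field_simps)
    qed
    finally show ?thesis unfolding B_def .
  qed
  define C where "C = Hd B"
  have D: "appell_dual A k = smult (fact k) (C k)" for k
    unfolding C_def B_def using dual_eq[OF A0 dA] by simp
  have C0: "C 0 = 1" unfolding C_def by simp
  have dC: "pderiv (C k) = C (k - 1)" if "k \<ge> 1" for k
    using that deriv_Hd[where B=B and n="k-1", OF B0 dB] unfolding C_def by (cases k) auto
  have D0: "appell_dual A 0 = 1" unfolding D C0 by simp
  have dD: "pderiv (appell_dual A k) = smult (of_nat k) (appell_dual A (k-1))" if k: "k \<ge> 1" for k
  proof -
    obtain m where m: "k = Suc m" using k by (cases k) auto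
    show ?thesis unfolding D pderiv_smult dC[OF k] unfolding m by (simp add: algebra_simps)
  qed
  have CB: "(\<lambda>k. smult (inverse (fact k)) (appell_dual A k)) = C"
    unfolding D by auto
  have "appell_dual (appell_dual A) n = smult (fact n) (Hd C n)"
    using dual_eq[OF D0 dD] unfolding CB by simp
  also have "Hd C n = B n"
  proof (rule conv_unique[where B=C, OF C0])
    fix k
    show "conv C (Hd C) k = conv C B k"
    proof -
      have h1: "conv C (Hd C) k = (if k = 0 then 1 else 0)" by (rule conv_Hd[where B=C, OF C0])
      have h2: "conv C B k = (-1)^k * conv B C k" by (rule conv_sym)
      have h3: "conv B C k = (if k = 0 then 1 else 0)" unfolding C_def by (rule conv_Hd[where B=B, OF B0])
      show ?thesis using h1 h2 h3 by simp
    qed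
  qed
  finally show "appell_dual (appell_dual A) n = A n" unfolding B_def by simp
qed


end
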